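(* Let $\Omega$ be a finite set of $M$ states and consider a time series $\omega^{1}\omega^{2}\omega^{3}\cdots$ with $\omega^{i}\in\Omega$. Let $\Pi$ be its predictability and $R$ the Bayes error rate of the $M$-classification problem whose samples are indexed by the time steps $i=1,\dots,n$, with sample $i$ having class label $\omega^{i}$ and feature $x_{i-1}=\omega^{1}\cdots\omega^{i-1}$, the series before that state ($x_0=\varnothing$), in the limit $n\to\infty$. Then $$\Pi = 1-R.$$
   Context: Predictability: for $n\ge 1$ let $x_{n-1}=\omega^{1}\cdots\omega^{n-1}$ denote the history before time $n$. Let $\pi(x_{n-1})=\sup_{\omega\in\Omega}\Pr[\omega^{n}=\omega\mid x_{n-1}]$ be the probability of the most probable next state given the history. The predictability of the $n$-th state is $\Pi(n)=\sum_{x_{n-1}}P(x_{n-1})\,\pi(x_{n-1})$, where $P(x_{n-1})$ is the probability of observing the history $x_{n-1}$ and the sum runs over all possible histories of length $n-1$. The overall predictability is $\Pi=\lim_{n\to\infty}\frac{1}{n}\sum_{i=1}^{n}\Pi(i)$. Bayes error rate: for an $M$-class problem with classes $\omega_1,\dots,\omega_M$, prior probabilities $p(\omega_j)$, feature set $X'$ and class-conditional densities $p(x\mid\omega_j)$, $$R=1-\sum_{j=1}^{M}\int_{\Gamma_j}p(\omega_j)\,p(x\mid\omega_j)\,dx,$$ where $\Gamma_j=\{x\in X' : p(\omega_j)p(x\mid\omega_j)>\max_{k\neq j}p(\omega_k)p(x\mid\omega_k)\}$. *)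

theory Defs
  imports "HOL-Probability.Probability"
begin

text \<open>A history x_{n-1} is a list of
  length n-1; its entry k (0-based) is the state at time k+1.\<close>

definition hist_event :: "'b measure \<Rightarrow> (nat \<Rightarrow> 'b \<Rightarrow> 'a) \<Rightarrow> 'a list \<Rightarrow> 'b set" where
  "hist_event M X xs = {s \<in> space M. \<forall>k<length xs. X (Suc k) s = xs ! k}"

definition P_hist :: "'b measure \<Rightarrow> (nat \<Rightarrow> 'b \<Rightarrow> 'a) \<Rightarrow> 'a list \<Rightarrow> real" where
  "P_hist M X xs = measure M (hist_event M X xs)"

text \<open>Pr[omega^n = w | x_{n-1}] with n = length xs + 1.\<close>
definition next_prob :: "'b measure \<Rightarrow> (nat \<Rightarrow> 'b \<Rightarrow> 'a) \<Rightarrow> 'a list \<Rightarrow> 'a \<Rightarrow> real" where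
  "next_prob M X xs w = P_hist M X (xs @ [w]) / P_hist M X xs"

definition pi_hist :: "'a set \<Rightarrow> 'b measure \<Rightarrow> (nat \<Rightarrow> 'b \<Rightarrow> 'a) \<Rightarrow> 'a list \<Rightarrow> real" where
  "pi_hist \<Omega> M X xs = Sup ((\<lambda>w. next_prob M X xs w) ` \<Omega>)"

definition histories :: "'a set \<Rightarrow> nat \<Rightarrow> 'a list set" where
  "histories \<Omega> m = {xs. set xs \<subseteq> \<Omega> \<and> length xs = m}"

definition Pi_n :: "'a set \<Rightarrow> 'b measure \<Rightarrow> (nat \<Rightarrow> 'b \<Rightarrow> 'a) \<Rightarrow> nat \<Rightarrow> real" where
  "Pi_n \<Omega> M X n = (\<Sum>xs\<in>histories \<Omega> (n - 1). P_hist M X xs * pi_hist \<Omega> M X xs)"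

text \<open>(1/n) * sum_{i=1}^n Pi(i); the predictability is the limit of this sequence.\<close>
definition avg_pred :: "'a set \<Rightarrow> 'b measure \<Rightarrow> (nat \<Rightarrow> 'b \<Rightarrow> 'a) \<Rightarrow> nat \<Rightarrow> real" where
  "avg_pred \<Omega> M X n = (\<Sum>i=1..n. Pi_n \<Omega> M X i) / real n"

text \<open>Classes C, priors p, class-conditional densities f (w.r.t. counting measure on the
  finite feature set X'). The decision region of class j consists of the features where
  p j * f j x is maximal; ties are broken by a fixed choice so that the regions partition X'.\<close>

definition bayes_choice :: "'c set \<Rightarrow> ('c \<Rightarrow> real) \<Rightarrow> ('c \<Rightarrow> 'x \<Rightarrow> real) \<Rightarrow> 'x \<Rightarrow> 'c" where
  "bayes_choice C p f x = (SOME j. j \<in> C \<and> (\<forall>k\<in>C. p k * f k x \<le> p j * f j x))"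

definition bayes_region :: "'c set \<Rightarrow> ('c \<Rightarrow> real) \<Rightarrow> ('c \<Rightarrow> 'x \<Rightarrow> real) \<Rightarrow> 'x set \<Rightarrow> 'c \<Rightarrow> 'x set" where
  "bayes_region C p f X' j = {x \<in> X'. bayes_choice C p f x = j}"

definition bayes_error :: "'c set \<Rightarrow> ('c \<Rightarrow> real) \<Rightarrow> ('c \<Rightarrow> 'x \<Rightarrow> real) \<Rightarrow> 'x set \<Rightarrow> real" where
  "bayes_error C p f X' = 1 - (\<Sum>j\<in>C. \<Sum>x\<in>bayes_region C p f X' j. p j * f j x)"

text \<open>Samples i = 1..n (equally weighted), label omega^i, feature x_{i-1}.
  Prior of class w: (1/n) sum_i Pr[X i = w].
  Joint weight of (feature xs, class w): (1/n) P(xs @ [w]) (for length xs < n).\<close>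

definition ts_prior :: "'b measure \<Rightarrow> (nat \<Rightarrow> 'b \<Rightarrow> 'a) \<Rightarrow> nat \<Rightarrow> 'a \<Rightarrow> real" where
  "ts_prior M X n w = (\<Sum>i=1..n. measure M {s \<in> space M. X i s = w}) / real n"

definition ts_cond :: "'b measure \<Rightarrow> (nat \<Rightarrow> 'b \<Rightarrow> 'a) \<Rightarrow> nat \<Rightarrow> 'a \<Rightarrow> 'a list \<Rightarrow> real" where
  "ts_cond M X n w xs =
     (if length xs < n then P_hist M X (xs @ [w]) / real n else 0) / ts_prior M X n w"

definition ts_features :: "'a set \<Rightarrow> nat \<Rightarrow> 'a list set" where
  "ts_features \<Omega> n = {xs. set xs \<subseteq> \<Omega> \<and> length xs < n}"

definition ts_bayes_error :: "'a set \<Rightarrow> 'b measure \<Rightarrow> (nat \<Rightarrow> 'b \<Rightarrow> 'a) \<Rightarrow> nat \<Rightarrow> real" where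
  "ts_bayes_error \<Omega> M X n = bayes_error \<Omega> (ts_prior M X n) (ts_cond M X n) (ts_features \<Omega> n)"

end

theory Submission
  imports Defs
begin

context
  fixes M :: "'b measure" and X :: "nat \<Rightarrow> 'b \<Rightarrow> 'a" and \<Omega> :: "'a set"
  assumes PS: "prob_space M"
    and fin: "finite \<Omega>" and ne: "\<Omega> \<noteq> {}"
    and Xm: "\<And>i. X i \<in> M \<rightarrow>\<^sub>M count_space UNIV"
begin

lemma hist_sets: "hist_event M X xs \<in> sets M"
proof (cases "xs = []")
  case True
  then show ?thesis unfolding hist_event_def by simp
next
  case False
  have "hist_event M X xs = (\<Inter>k\<in>{..<length xs}. X (Suc k) -` {xs!k} \<inter> space M)"
    using False unfolding hist_event_def by auto
  also have "\<dots> \<in> sets M"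
    using Xm False by (intro sets.finite_INT) (auto simp: measurable_count_space_eq2)
  finally show ?thesis .
qed

lemma P_nonneg: "P_hist M X xs \<ge> 0"
  unfolding P_hist_def by simp

lemma P_snoc_le: "P_hist M X (xs @ [w]) \<le> P_hist M X xs"
proof -
  have "hist_event M X (xs @ [w]) \<subseteq> hist_event M X xs"
    unfolding hist_event_def by (auto simp: nth_append)
  then show ?thesis unfolding P_hist_def
    using hist_sets PS by (intro finite_measure.finite_measure_mono prob_space.finite_measure) auto
qed

lemma P_snoc_le2: "P_hist M X (xs @ [w]) \<le> measure M {s \<in> space M. X (Suc (length xs)) s = w}"
proof -
  have "hist_event M X (xs @ [w]) \<subseteq> {s \<in> space M. X (Suc (length xs)) s = w}"
    unfolding hist_event_def by (auto simp: nth_append)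
  moreover have "{s \<in> space M. X (Suc (length xs)) s = w} \<in> sets M"
  proof -
    have "{s \<in> space M. X (Suc (length xs)) s = w} = X (Suc (length xs)) -` {w} \<inter> space M" by auto
    then show ?thesis using Xm by (auto simp: measurable_count_space_eq2)
  qed
  ultimately show ?thesis unfolding P_hist_def
    using PS by (intro finite_measure.finite_measure_mono prob_space.finite_measure) auto
qed

lemma lemA:
  assumes "length xs < n"
  shows "ts_prior M X n j * ts_cond M X n j xs = P_hist M X (xs @ [j]) / real n"
proof (cases "ts_prior M X n j = 0")
  case True
  have "Suc (length xs) \<in> {1..n}" using assms by auto
  then have "measure M {s \<in> space M. X (Suc (length xs)) s = j}
      \<le> (\<Sum>i=1..n. measure M {s \<in> space M. X i s = j})"
    by (intro member_le_sum) auto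
  moreover have "(\<Sum>i=1..n. measure M {s \<in> space M. X i s = j}) = 0"
    using True assms unfolding ts_prior_def by auto
  ultimately have "P_hist M X (xs @ [j]) = 0"
    using P_snoc_le2[of xs j] P_nonneg[of "xs@[j]"] by linarith
  then show ?thesis using True by simp
next
  case False
  then show ?thesis unfolding ts_cond_def using assms by simp
qed

lemma lemPi:
  assumes "j \<in> \<Omega>" "\<And>k. k \<in> \<Omega> \<Longrightarrow> P_hist M X (xs @ [k]) \<le> P_hist M X (xs @ [j])"
  shows "P_hist M X xs * pi_hist \<Omega> M X xs = P_hist M X (xs @ [j])"
proof (cases "P_hist M X xs = 0")
  case True
  then show ?thesis using P_snoc_le[of xs j] P_nonneg[of "xs@[j]"] by simp
next
  case False
  then have pos: "P_hist M X xs > 0" using P_nonneg[of xs] by simp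
  have "Sup ((\<lambda>w. next_prob M X xs w) ` \<Omega>) = next_prob M X xs j"
    using assms pos unfolding next_prob_def
    by (intro cSup_eq_maximum) (auto intro: divide_right_mono)
  then show ?thesis unfolding pi_hist_def next_prob_def using pos by simp
qed

lemma fin_hist: "finite (histories \<Omega> m)"
  unfolding histories_def using finite_lists_length_eq[OF fin] by simp

lemma fin_feat: "finite (ts_features \<Omega> n)"
proof -
  have "ts_features \<Omega> n = (\<Union>m<n. histories \<Omega> m)"
    unfolding ts_features_def histories_def by auto
  then show ?thesis using fin_hist by simp
qed

lemma main:
  assumes n: "n > 0"
  shows "ts_bayes_error \<Omega> M X n = 1 - avg_pred \<Omega> M X n"
proof -
  let ?F = "ts_features \<Omega> n"
  let ?c = "bayes_choice \<Omega> (ts_prior M X n) (ts_cond M X n)"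
  let ?h = "\<lambda>j x. ts_prior M X n j * ts_cond M X n j x"
  have cprop: "?c x \<in> \<Omega> \<and> (\<forall>k\<in>\<Omega>. ?h k x \<le> ?h (?c x) x)" for x
  proof -
    have "\<exists>j. j \<in> \<Omega> \<and> (\<forall>k\<in>\<Omega>. ?h k x \<le> ?h j x)"
    proof -
      have "Max ((\<lambda>j. ?h j x) ` \<Omega>) \<in> (\<lambda>j. ?h j x) ` \<Omega>"
        using fin ne by (intro Max_in) auto
      then obtain j where j: "j \<in> \<Omega>" "?h j x = Max ((\<lambda>j. ?h j x) ` \<Omega>)" by auto
      have "\<forall>k\<in>\<Omega>. ?h k x \<le> ?h j x" unfolding j(2) using fin by auto
      then show ?thesis using j by blast
    qed
    then show ?thesis unfolding bayes_choice_def by (rule someI_ex)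
  qed
  have S1: "(\<Sum>j\<in>\<Omega>. \<Sum>x\<in>bayes_region \<Omega> (ts_prior M X n) (ts_cond M X n) ?F j. ?h j x)
      = (\<Sum>x\<in>?F. ?h (?c x) x)"
  proof -
    have "(\<Sum>j\<in>\<Omega>. \<Sum>x\<in>bayes_region \<Omega> (ts_prior M X n) (ts_cond M X n) ?F j. ?h j x)
        = (\<Sum>j\<in>\<Omega>. \<Sum>x\<in>{x\<in>?F. ?c x = j}. ?h (?c x) x)"
      unfolding bayes_region_def by (intro sum.cong refl) auto
    also have "\<dots> = (\<Sum>x\<in>?F. ?h (?c x) x)"
      using cprop by (intro sum.group fin_feat fin) auto
    finally show ?thesis .
  qed
  have S2: "?h (?c x) x = P_hist M X x * pi_hist \<Omega> M X x / real n" if "x \<in> ?F" for x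
  proof -
    have l: "length x < n" using that unfolding ts_features_def by auto
    have "P_hist M X x * pi_hist \<Omega> M X x = P_hist M X (x @ [?c x])"
    proof (rule lemPi)
      show "?c x \<in> \<Omega>" using cprop by blast
      fix k assume "k \<in> \<Omega>"
      then have "?h k x \<le> ?h (?c x) x" using cprop by blast
      then show "P_hist M X (x @ [k]) \<le> P_hist M X (x @ [?c x])"
        using lemA[OF l] n by (simp add: divide_right_mono_neg) (simp add: divide_le_cancel)
    qed
    then show ?thesis using lemA[OF l] by simp
  qed
  have S3: "(\<Sum>i=1..n. Pi_n \<Omega> M X i) = (\<Sum>x\<in>?F. P_hist M X x * pi_hist \<Omega> M X x)"
  proof -
    have "(\<Sum>i=1..n. Pi_n \<Omega> M X i) = (\<Sum>m<n. Pi_n \<Omega> M X (Suc m))"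
      by (simp add: sum.atLeast1_atMost_eq)
    also have "\<dots> = (\<Sum>m<n. \<Sum>x\<in>{x\<in>?F. length x = m}. P_hist M X x * pi_hist \<Omega> M X x)"
      unfolding Pi_n_def histories_def ts_features_def by (intro sum.cong refl) auto
    also have "\<dots> = (\<Sum>x\<in>?F. P_hist M X x * pi_hist \<Omega> M X x)"
      by (intro sum.group fin_feat) (auto simp: ts_features_def)
    finally show ?thesis .
  qed
  have "ts_bayes_error \<Omega> M X n = 1 - (\<Sum>x\<in>?F. P_hist M X x * pi_hist \<Omega> M X x / real n)"
    unfolding ts_bayes_error_def bayes_error_def using S1 S2 by simp
  also have "\<dots> = 1 - avg_pred \<Omega> M X n"
    unfolding avg_pred_def S3 by (simp add: sum_divide_distrib)
  finally show ?thesis .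
qed

end

theorem theorem1:
  fixes M :: "'b measure" and X :: "nat \<Rightarrow> 'b \<Rightarrow> 'a" and \<Omega> :: "'a set" and pred :: real
  assumes "prob_space M"
    and "finite \<Omega>" and "\<Omega> \<noteq> {}"
    and "\<And>i. X i \<in> M \<rightarrow>\<^sub>M count_space UNIV"
    and "\<And>i s. s \<in> space M \<Longrightarrow> X i s \<in> \<Omega>"
  shows "(avg_pred \<Omega> M X \<longlonglongrightarrow> pred) \<longleftrightarrow> (ts_bayes_error \<Omega> M X \<longlonglongrightarrow> 1 - pred)"
proof -
  have ev: "eventually (\<lambda>n. ts_bayes_error \<Omega> M X n = 1 - avg_pred \<Omega> M X n) sequentially"
    using main[where M=M and X=X and \<Omega>=\<Omega>, OF assms(1-4)] eventually_gt_at_top[of 0] by (metis (mono_tags, lifting) eventually_mono)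
  have "(ts_bayes_error \<Omega> M X \<longlonglongrightarrow> 1 - pred) \<longleftrightarrow> ((\<lambda>n. 1 - avg_pred \<Omega> M X n) \<longlonglongrightarrow> 1 - pred)"
    by (rule tendsto_cong[OF ev])
  also have "\<dots> \<longleftrightarrow> (avg_pred \<Omega> M X \<longlonglongrightarrow> pred)"
  proof
    assume "(\<lambda>n. 1 - avg_pred \<Omega> M X n) \<longlonglongrightarrow> 1 - pred"
    from tendsto_diff[OF tendsto_const[of 1] this] show "avg_pred \<Omega> M X \<longlonglongrightarrow> pred" by simp
  next
    assume "avg_pred \<Omega> M X \<longlonglongrightarrow> pred"
    from tendsto_diff[OF tendsto_const[of 1] this] show "(\<lambda>n. 1 - avg_pred \<Omega> M X n) \<longlonglongrightarrow> 1 - pred" .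
  qed
  finally show ?thesis by simp
qed

end
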